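(* For every $\varepsilon>0$ there exists $C_\varepsilon\in\mathbb R$, depending only on $\varepsilon$ and $p$, such that $$|u|\le\varepsilon\,\Gamma(u)+C_\varepsilon\qquad\text{for all }u\in\bar I_p.$$
   Context: $p\in L^1_{loc}(\mathbb R_+)$ is absolutely continuous and increasing on $(0,\infty)$ (with $p'>0$), and $\lim_{u\to+\infty}p(u)=+\infty$. If $p(0):=\lim_{u\downarrow0}p(u)$ is finite, $p$ is extended to $\mathbb R$ by $p(u)=2p(0)-p(-u)$ for $u\le0$. $I_p=(0,\infty)$ if $p(0)=-\infty$ and $I_p=\mathbb R$ otherwise; $\bar I_p$ is its closure in $\mathbb R$. $\Gamma(u)=\int_1^u(p(a)-p(1))\,da$ for $u\in\bar I_p$. *)

theory Defs
  imports "HOL-Analysis.Analysis"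
begin

definition abs_cont_on_interval :: "(real \<Rightarrow> real) \<Rightarrow> real \<Rightarrow> real \<Rightarrow> bool" where
  "abs_cont_on_interval f a b \<longleftrightarrow>
     (\<forall>\<epsilon>>0. \<exists>\<delta>>0. \<forall>(n::nat) (s::nat \<Rightarrow> real) (t::nat \<Rightarrow> real).
        (\<forall>i<n. a \<le> s i \<and> s i \<le> t i \<and> t i \<le> b) \<and>
        (\<forall>i<n. \<forall>j<n. i \<noteq> j \<longrightarrow> t i \<le> s j \<or> t j \<le> s i) \<and>
        (\<Sum>i<n. t i - s i) < \<delta>
        \<longrightarrow> (\<Sum>i<n. \<bar>f (t i) - f (s i)\<bar>) < \<epsilon>)"

definition abs_cont_on_pos :: "(real \<Rightarrow> real) \<Rightarrow> bool" where
  "abs_cont_on_pos f \<longleftrightarrow> (\<forall>a b. 0 < a \<and> a \<le> b \<longrightarrow> abs_cont_on_interval f a b)"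

text \<open>The value p(0) := lim_{u -> 0+} p(u) (meaningful when finite).\<close>
definition p0 :: "(real \<Rightarrow> real) \<Rightarrow> real" where
  "p0 p = Lim (at_right 0) p"

definition p0_infinite :: "(real \<Rightarrow> real) \<Rightarrow> bool" where
  "p0_infinite p \<longleftrightarrow> filterlim p at_bot (at_right 0)"

text \<open>The extension of p: equal to p on (0,oo); if p(0) is finite, p(0) at 0 and
  the odd reflection 2 p(0) - p(-u) for u < 0.  (Values off I_p are irrelevant when
  p(0) = -oo, except at 0 where they do not affect integrals.)\<close>
definition pext :: "(real \<Rightarrow> real) \<Rightarrow> real \<Rightarrow> real" where
  "pext p u = (if 0 < u then p u else if u = 0 then p0 p else 2 * p0 p - p (- u))"

definition Ip :: "(real \<Rightarrow> real) \<Rightarrow> real set" where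
  "Ip p = (if p0_infinite p then {0<..} else UNIV)"

definition Gamma_p :: "(real \<Rightarrow> real) \<Rightarrow> real \<Rightarrow> real" where
  "Gamma_p p u = (LBINT a=1..u. pext p a - pext p 1)"

end

theory Submission
  imports Defs
begin

lemma set_int_const_open: "set_integrable lborel {a<..<b::real} (\<lambda>x. c::real)"
proof (cases "a \<le> b")
  case True
  then show ?thesis using interval_integral_const(1)[of a b c]
    by (simp add: interval_lebesgue_integrable_def)
next
  case False
  then have "{a<..<b} = {}" by auto
  then show ?thesis by simp
qed

lemma set_int_zero: "set_integrable M A (\<lambda>x. 0::real)"
  by (simp add: set_integrable_def)

lemma gamma_ge:
  fixes g :: "real \<Rightarrow> real"
  assumes "a \<le> b" "set_integrable lborel {a<..<b} g" "\<And>x. a < x \<Longrightarrow> x < b \<Longrightarrow> c \<le> g x"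
  shows "c * (b - a) \<le> (LBINT x=a..b. g x)"
proof -
  have "(LBINT x=a..b. g x) = (LINT x:{a<..<b}|lborel. g x)"
    using assms(1) by (simp add: interval_lebesgue_integral_le_eq)
  moreover have "c * (b - a) = (LINT x:{a<..<b}|lborel. c)"
    using interval_lebesgue_integral_le_eq[of "ereal a" "ereal b" lborel "\<lambda>x. c"] assms(1) by simp
  moreover have "(LINT x:{a<..<b}|lborel. c) \<le> (LINT x:{a<..<b}|lborel. g x)"
    by (rule set_integral_mono[OF set_int_const_open assms(2)]) (use assms(3) in auto)
  ultimately show ?thesis by simp
qed

lemma gamma_le:
  fixes g :: "real \<Rightarrow> real"
  assumes "a \<le> b" "set_integrable lborel {a<..<b} g" "\<And>x. a < x \<Longrightarrow> x < b \<Longrightarrow> g x \<le> c"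
  shows "(LBINT x=a..b. g x) \<le> c * (b - a)"
proof -
  have "(LBINT x=a..b. g x) = (LINT x:{a<..<b}|lborel. g x)"
    using assms(1) by (simp add: interval_lebesgue_integral_le_eq)
  moreover have "c * (b - a) = (LINT x:{a<..<b}|lborel. c)"
    using interval_lebesgue_integral_le_eq[of "ereal a" "ereal b" lborel "\<lambda>x. c"] assms(1) by simp
  moreover have "(LINT x:{a<..<b}|lborel. g x) \<le> (LINT x:{a<..<b}|lborel. c)"
    by (rule set_integral_mono[OF assms(2) set_int_const_open]) (use assms(3) in auto)
  ultimately show ?thesis by simp
qed

lemma split_int:
  fixes g :: "real \<Rightarrow> real"
  assumes "a \<le> m" "m \<le> b" "set_integrable lborel {a<..<b} g"
  shows "(LBINT x=a..b. g x) = (LBINT x=a..m. g x) + (LBINT x=m..b. g x)"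
proof -
  have "interval_lebesgue_integrable lborel (min (ereal a) (min (ereal m) (ereal b))) (max (ereal a) (max (ereal m) (ereal b))) g"
    using assms by (simp add: interval_lebesgue_integrable_def min_absorb1 max_absorb2)
  from interval_integral_sum[OF this] show ?thesis by simp
qed

theorem lemma3p2:
  fixes p :: "real \<Rightarrow> real"
  assumes L1loc: "\<And>b. 0 \<le> b \<Longrightarrow> set_integrable lborel {0..b} p"
    and ac: "abs_cont_on_pos p"
    and incr: "mono_on {0<..} p"
    and deriv_pos: "AE x in lborel. 0 < x \<longrightarrow> (\<exists>D>0. (p has_real_derivative D) (at x))"
    and lim_top: "filterlim p at_top at_top"
    and p0_cases: "p0_infinite p \<or> (\<exists>L. (p \<longlongrightarrow> L) (at_right 0))"
    and eps: "0 < \<epsilon>"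
  shows "\<exists>C::real. \<forall>u \<in> closure (Ip p). \<bar>u\<bar> \<le> \<epsilon> * Gamma_p p u + C"
proof -
  define g where "g = (\<lambda>x. pext p x - pext p 1)"
  have pe: "pext p x = p x" if "0 < x" for x using that by (simp add: pext_def)
  have pm: "p x \<le> p y" if "0 < x" "x \<le> y" for x y
    using incr that by (auto simp: mono_on_def)
  have G: "Gamma_p p u = (LBINT x=ereal 1..u. g x)" for u
    by (simp add: Gamma_p_def g_def one_ereal_def)
  have "eventually (\<lambda>x. p 1 + 1/\<epsilon> \<le> p x) at_top"
    using lim_top by (simp add: filterlim_at_top)
  then obtain N where N: "\<And>x. x \<ge> N \<Longrightarrow> p 1 + 1/\<epsilon> \<le> p x"
    by (auto simp: eventually_at_top_linorder)
  define M where "M = max 1 N"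
  have M1: "1 \<le> M" by (simp add: M_def)
  have gM: "1/\<epsilon> \<le> g x" if "M \<le> x" for x
    using N[of x] that M1 by (simp add: g_def pe M_def)
  have gpos: "0 \<le> g x" if "1 \<le> x" for x
    using pm[of 1 x] that by (simp add: g_def pe)
  have fin: "p0 p \<le> p y \<and> mono (pext p) \<and> (\<forall>x. x \<le> 1 \<longrightarrow> g x \<le> 0) \<and> (\<forall>x. x \<le> -M \<longrightarrow> g x \<le> -1/\<epsilon>)"
    if nf: "\<not> p0_infinite p" and y: "0 < y" for y
  proof -
    obtain L where L: "(p \<longlongrightarrow> L) (at_right 0)" using p0_cases nf by blast
    have pL: "p0 p = L" unfolding p0_def using L by (simp add: tendsto_Lim)
    have Lle: "L \<le> p z" if "0 < z" for z
    proof (rule tendsto_upperbound[OF L])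
      have "eventually (\<lambda>x. x < z) (at_right (0::real))"
        using that eventually_at_right_less order_tendstoD(2)[OF tendsto_ident_at that] by blast
      moreover have "eventually (\<lambda>x. 0 < x) (at_right (0::real))"
        by (simp add: eventually_at_right_less)
      ultimately show "eventually (\<lambda>x. p x \<le> p z) (at_right 0)"
        by eventually_elim (auto intro: pm)
    qed simp
    have mono: "mono (pext p)"
    proof (rule monoI)
      fix x y :: real assume xy: "x \<le> y"
      show "pext p x \<le> pext p y"
        using xy pm[of x y] pm[of "-y" "-x"] Lle[of "-x"] Lle[of y] Lle[of "-y"]
        by (auto simp: pext_def pL)
    qed
    have g1: "g x \<le> 0" if "x \<le> 1" for x
      using monoD[OF mono that] by (simp add: g_def)
    have g2: "g x \<le> -1/\<epsilon>" if "x \<le> -M" for x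
    proof -
      have "-x \<ge> N" "0 < -x" using that M1 by (auto simp: M_def)
      then have "p 1 + 1/\<epsilon> \<le> p (-x)" using N by blast
      moreover have "L \<le> p 1" using Lle by simp
      moreover have "x < 0" using that M1 by simp
      ultimately show ?thesis by (simp add: g_def pext_def pL)
    qed
    show ?thesis using Lle[OF y] pL mono g1 g2 by auto
  qed
  have gneg: "g x \<le> 0" if "x \<le> 1" "0 < x \<or> \<not> p0_infinite p" for x
    using that pm[of x 1] fin[of 1] by (auto simp: g_def pe)
  have intg: "set_integrable lborel {a<..<b} g" if "a \<le> b" "0 \<le> a \<or> \<not> p0_infinite p" for a b
  proof -
    have "set_integrable lborel {a<..<b} (pext p)"
    proof (cases "0 \<le> a")
      case True
      have "set_integrable lborel {a<..<b} p"
        by (rule set_integrable_subset[OF L1loc[of b]]) (use True that in auto)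
      then show ?thesis
        by (rule set_integrable_cong[THEN iffD1, rotated -1]) (use True in \<open>auto simp: pe\<close>)
    next
      case False
      then have nf: "\<not> p0_infinite p" using that by auto
      then have mono: "mono (pext p)" using fin[of 1] by auto
      have "integrable (lebesgue_on {a..b}) (pext p)"
        by (rule integrable_mono_on) (use mono in \<open>auto simp: mono_on_def mono_def\<close>)
      then have "set_integrable lebesgue {a..b} (pext p)"
        by (simp add: set_integrable_eq)
      moreover have "(\<lambda>x. indicator {a..b} x *\<^sub>R pext p x) \<in> borel_measurable lborel"
        using borel_measurable_mono[OF mono] by measurable
      ultimately have "set_integrable lborel {a..b} (pext p)"
        unfolding set_integrable_def using integrable_completion by blast
      then show ?thesis
        by (rule set_integrable_subset) auto
    qed
    then show ?thesis unfolding g_def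
      by (intro set_integral_diff(1) set_int_const_open)
  qed
  show ?thesis
  proof (intro exI ballI)
    fix u assume u: "u \<in> closure (Ip p)"
    have dom: "0 \<le> u \<or> \<not> p0_infinite p"
      using u by (auto simp: Ip_def split: if_splits)
    consider "M \<le> u" | "1 \<le> u" "u < M" | "u < 1" "-M \<le> u" | "u < -M" by linarith
    then show "\<bar>u\<bar> \<le> \<epsilon> * Gamma_p p u + M"
    proof cases
      case 1
      have i: "set_integrable lborel {1<..<u} g" using intg[of 1 u] 1 M1 by auto
      have "(LBINT x=ereal 1..u. g x) = (LBINT x=ereal 1..M. g x) + (LBINT x=M..u. g x)"
        using split_int[OF M1 1 i] by (simp add: one_ereal_def)
      moreover have "0 * (M - 1) \<le> (LBINT x=ereal 1..M. g x)"
        by (rule gamma_ge[OF M1]) (use intg[of 1 M] M1 gpos in auto)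
      moreover have "1/\<epsilon> * (u - M) \<le> (LBINT x=M..u. g x)"
        by (rule gamma_ge[OF 1]) (use intg[of M u] M1 1 gM in auto)
      ultimately have "(u - M)/\<epsilon> \<le> Gamma_p p u" by (simp add: G)
      then have "u - M \<le> \<epsilon> * Gamma_p p u" using eps by (simp add: field_simps)
      then show ?thesis using 1 M1 by simp
    next
      case 2
      have "0 * (u - 1) \<le> (LBINT x=ereal 1..u. g x)"
        by (rule gamma_ge) (use intg[of 1 u] 2 gpos in auto)
      then have "0 \<le> Gamma_p p u" by (simp add: G)
      then have "0 \<le> \<epsilon> * Gamma_p p u" using eps by simp
      then show ?thesis using 2 M1 by linarith
    next
      case 3
      have "(LBINT x=u..ereal 1. g x) \<le> 0 * (1 - u)"
        by (rule gamma_le) (use intg[of u 1] 3 gneg dom in auto)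
      then have "0 \<le> Gamma_p p u"
        by (simp add: G interval_integral_endpoints_reverse[of "ereal 1"])
      then have "0 \<le> \<epsilon> * Gamma_p p u" using eps by simp
      then show ?thesis using 3 M1 by linarith
    next
      case 4
      have nf: "\<not> p0_infinite p" using dom 4 M1 by auto
      note F = fin[OF nf zero_less_one]
      have i: "set_integrable lborel {u<..<1} g" using intg[of u 1] 4 M1 nf by auto
      have "(LBINT x=u..ereal 1. g x) = (LBINT x=u..-M. g x) + (LBINT x=-M..ereal 1. g x)"
        by (rule split_int[OF _ _ i]) (use 4 M1 in auto)
      moreover have "(LBINT x=-M..ereal 1. g x) \<le> 0 * (1 - -M)"
        by (rule gamma_le) (use intg[of "-M" 1] M1 nf F in auto)
      moreover have "(LBINT x=u..-M. g x) \<le> (-1/\<epsilon>) * (-M - u)"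
        by (rule gamma_le) (use intg[of u "-M"] 4 nf F in auto)
      ultimately have "(-M - u)/\<epsilon> \<le> Gamma_p p u"
        by (simp add: G interval_integral_endpoints_reverse[of "ereal 1"])
      then have "-M - u \<le> \<epsilon> * Gamma_p p u" using eps by (simp add: field_simps)
      then show ?thesis using 4 M1 by simp
    qed
  qed
qed

end
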